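(* In every identically ordered instance in which $n$ agents with equal responsibilities have additive disvaluations over chores $e_1,\ldots,e_m$ (with $c_i(e_j)\ge c_i(e_k)$ for all agents $i$ and all $j<k$), the allocation produced by AlgChores gives every agent $i$ a bundle of disvalue at most $\frac{4n-1}{3n}APS_i$.
   Context: $APS_i=\max_p\min\{c_i(S):\sum_{e\in S}p_e\ge1/n\}$ over nonnegative price vectors summing to $1$. AlgChores (on identically ordered instances): start with empty bundles $B_1,\ldots,B_n$; for $r=1,\ldots,m$, add chore $e_r$ to the bundle of an agent who envies no other agent (agent $i$ envies $j$ if $c_i(B_i)>c_i(B_j)$), and then, while the envy graph contains a cycle, rotate the bundles along the cycle so that each agent on it receives the bundle she envied. *)

theory Defs
  imports Main "HOL.Real"
begin

text \<open>Agents are 0..<n, chores are 0..<m (chore index r stands for e_{r+1}).\<close>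

definition cost :: "(nat \<Rightarrow> real) \<Rightarrow> nat set \<Rightarrow> real" where
  "cost v S = (\<Sum>e\<in>S. v e)"

definition APS :: "nat \<Rightarrow> nat \<Rightarrow> (nat \<Rightarrow> real) \<Rightarrow> real" where
  "APS n m v = Sup { Min { cost v S | S. S \<subseteq> {..<m} \<and> (\<Sum>e\<in>S. p e) \<ge> 1 / real n }
                   | p. (\<forall>e<m. p e \<ge> 0) \<and> (\<Sum>e<m. p e) = 1 }"

definition envies :: "(nat \<Rightarrow> nat \<Rightarrow> real) \<Rightarrow> (nat \<Rightarrow> nat set) \<Rightarrow> nat \<Rightarrow> nat \<Rightarrow> bool" where
  "envies c B i j \<longleftrightarrow> cost (c i) (B i) > cost (c i) (B j)"

definition envy_cycle :: "nat \<Rightarrow> (nat \<Rightarrow> nat \<Rightarrow> real) \<Rightarrow> (nat \<Rightarrow> nat set) \<Rightarrow> nat list \<Rightarrow> bool" where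
  "envy_cycle n c B cyc \<longleftrightarrow> cyc \<noteq> [] \<and> distinct cyc \<and> set cyc \<subseteq> {..<n} \<and>
     (\<forall>t<length cyc. envies c B (cyc ! t) (cyc ! ((t + 1) mod length cyc)))"

text \<open>Rotating bundles along the cycle: each agent on it receives the bundle she envied.\<close>
definition rotate_along :: "nat list \<Rightarrow> (nat \<Rightarrow> nat set) \<Rightarrow> (nat \<Rightarrow> nat set)" where
  "rotate_along cyc B = (\<lambda>a. if a \<in> set cyc
       then B (cyc ! (((THE t. t < length cyc \<and> cyc ! t = a) + 1) mod length cyc))
       else B a)"

text \<open>Reachable states of AlgChores: alg_state n m c r B means that after handling
  chores 0..<r (possibly in the middle of the cycle-elimination loop) the allocation is B.
  A new chore is only added once no envy cycle remains (the while loop has terminated),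
  and it goes to an agent who envies no other agent.  Choices are arbitrary.\<close>
inductive alg_state :: "nat \<Rightarrow> nat \<Rightarrow> (nat \<Rightarrow> nat \<Rightarrow> real) \<Rightarrow> nat \<Rightarrow> (nat \<Rightarrow> nat set) \<Rightarrow> bool"
  for n m c where
  init: "alg_state n m c 0 (\<lambda>_. {})"
| add: "\<lbrakk> alg_state n m c r B; r < m; \<not> (\<exists>cyc. envy_cycle n c B cyc); i < n;
          \<forall>j<n. \<not> envies c B i j \<rbrakk>
        \<Longrightarrow> alg_state n m c (Suc r) (B(i := insert r (B i)))"
| rot: "\<lbrakk> alg_state n m c r B; envy_cycle n c B cyc \<rbrakk>
        \<Longrightarrow> alg_state n m c r (rotate_along cyc B)"

definition algchores_output :: "nat \<Rightarrow> nat \<Rightarrow> (nat \<Rightarrow> nat \<Rightarrow> real) \<Rightarrow> (nat \<Rightarrow> nat set) \<Rightarrow> bool" where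
  "algchores_output n m c B \<longleftrightarrow> alg_state n m c m B \<and> \<not> (\<exists>cyc. envy_cycle n c B cyc)"

end

theory Submission
  imports Defs
begin


lemma cost_nonneg: "(\<And>e. e \<in> S \<Longrightarrow> v e \<ge> 0) \<Longrightarrow> cost v S \<ge> 0"
  unfolding cost_def by (simp add: sum_nonneg)

lemma aps_lower:
  assumes n: "n \<ge> 1" and p0: "\<forall>e<m. p e \<ge> 0" and p1: "(\<Sum>e<m. p e) = 1"
    and L: "\<And>S. S \<subseteq> {..<m} \<Longrightarrow> (\<Sum>e\<in>S. p e) \<ge> 1 / real n \<Longrightarrow> cost v S \<ge> L"
  shows "L \<le> APS n m v"
proof -
  define M where "M q = {cost v S | S. S \<subseteq> {..<m} \<and> (\<Sum>e\<in>S. q e) \<ge> 1 / real n}" for q :: "nat \<Rightarrow> real"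
  have fin: "finite (M q)" for q
  proof -
    have "M q \<subseteq> cost v ` Pow {..<m}" unfolding M_def by auto
    then show ?thesis by (rule finite_subset) auto
  qed
  have inM: "cost v {..<m} \<in> M q" if "(\<Sum>e<m. q e) = 1" for q
  proof -
    have "1 / real n \<le> 1" using n by simp
    then show ?thesis unfolding M_def using that by (auto simp: lessThan_def)
  qed
  have le: "Min (M q) \<le> cost v {..<m}" if "(\<Sum>e<m. q e) = 1" for q
    using Min_le[OF fin inM[OF that]] .
  have "L \<le> Min (M p)"
    using fin inM[OF p1] L unfolding M_def by (subst Min_ge_iff) auto
  moreover have "Min (M p) \<le> Sup {Min (M q) | q. (\<forall>e<m. q e \<ge> 0) \<and> (\<Sum>e<m. q e) = 1}"
    apply (rule cSup_upper)
     using p0 p1 apply blast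
    unfolding bdd_above_def using le by blast
  ultimately show ?thesis unfolding APS_def M_def by simp
qed



lemma aps_single:
  assumes n: "n \<ge> 1" and r: "r < m" and v0: "\<forall>e<m. v e \<ge> 0"
  shows "v r \<le> APS n m v"
proof (rule aps_lower[OF n, where p = "\<lambda>e. if e = r then 1 else 0"])
  show "\<forall>e<m. (0::real) \<le> (if e = r then 1 else 0)" by simp
  show "(\<Sum>e<m. (if e = r then 1 else 0::real)) = 1" using r by (simp add: sum.delta)
  fix S assume S: "S \<subseteq> {..<m}" and q: "1 / real n \<le> (\<Sum>e\<in>S. if e = r then 1 else 0::real)"
  have fS: "finite S" using S finite_subset by blast
  have "r \<in> S"
  proof (rule ccontr)
    assume "r \<notin> S"
    then have "(\<Sum>e\<in>S. if e = r then 1 else 0::real) = 0" by (intro sum.neutral) auto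
    with q n show False by simp
  qed
  then have "cost v S = v r + cost v (S - {r})" unfolding cost_def using fS by (simp add: sum.remove)
  moreover have "cost v (S - {r}) \<ge> 0" using S v0 by (intro cost_nonneg) auto
  ultimately show "v r \<le> cost v S" by simp
qed

lemma aps_prop:
  assumes n: "n \<ge> 1" and m: "m \<ge> 1" and v0: "\<forall>e<m. v e \<ge> 0"
  shows "cost v {..<m} \<le> real n * APS n m v"
proof (cases "cost v {..<m} = 0")
  case True
  have "0 \<le> APS n m v" using aps_single[OF n _ v0, of 0] m v0 by force
  then show ?thesis using True by simp
next
  case False
  define C where "C = cost v {..<m}"
  have C0: "C > 0" using False v0 cost_nonneg[of "{..<m}" v] unfolding C_def by force
  have "C / real n \<le> APS n m v"
  proof (rule aps_lower[OF n, where p = "\<lambda>e. v e / C"])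
    show "\<forall>e<m. 0 \<le> v e / C" using v0 C0 by simp
    show "(\<Sum>e<m. v e / C) = 1" using C0 unfolding C_def cost_def by (simp add: sum_divide_distrib[symmetric])
    fix S assume S: "S \<subseteq> {..<m}" and q: "1 / real n \<le> (\<Sum>e\<in>S. v e / C)"
    have "(\<Sum>e\<in>S. v e / C) = cost v S / C" unfolding cost_def by (simp add: sum_divide_distrib)
    with q have "1 / real n \<le> cost v S / C" by simp
    then have "C * (1 / real n) \<le> C * (cost v S / C)" using C0 by (intro mult_left_mono) auto
    then show "C / real n \<le> cost v S" using C0 by simp
  qed
  then show ?thesis using n unfolding C_def by (simp add: field_simps)
qed



lemma cost_mono:
  assumes "T \<subseteq> S" "S \<subseteq> {..<m}" "\<forall>e<m. v e \<ge> 0"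
  shows "cost v T \<le> cost v S"
  unfolding cost_def
  apply (rule sum_mono2)
  using assms by (auto intro: finite_subset[of S "{..<m}"])

lemma aps_pairs:
  assumes n: "n \<ge> 1" and nr: "n \<le> r" and r: "r < m" and v0: "\<forall>e<m. v e \<ge> 0"
    and dec: "\<forall>j k. j < k \<and> k < m \<longrightarrow> v j \<ge> v k"
  shows "3 * v r \<le> APS n m v \<or> (r < 2 * n \<and> v (2 * n - r - 1) + v r \<le> APS n m v)"
proof -
  define K where "K = 2 * n - r"
  have KR: "K \<le> r" using nr unfolding K_def by simp
  define W where "W = real (r + 1 + K)"
  have W: "W \<ge> 2 * real n + 1" unfolding W_def K_def by linarith
  have Wp: "W > 0" using W by simp
  define w where "w e = (if e < K then 2 else if e \<le> r then 1 else (0::real))" for e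
  define Lb where "Lb = min (3 * v r) (if 0 < K then v (K - 1) + v r else 3 * v r)"
  have decr: "v e \<ge> v r" if "e \<le> r" for e
    using dec r that by (cases "e = r") auto
  have wsum: "(\<Sum>e\<in>S. w e) = real (card (S \<inter> {..r})) + real (card (S \<inter> {..<K}))"
    if "finite S" for S
  proof -
    have "(\<Sum>e\<in>S. w e) = (\<Sum>e\<in>S. (if e \<le> r then 1 else 0) + (if e < K then 1 else 0))"
      unfolding w_def using KR by (intro sum.cong) auto
    also have "\<dots> = (\<Sum>e\<in>S. (if e \<le> r then 1 else 0)) + (\<Sum>e\<in>S. (if e < K then 1 else (0::real)))"
      by (simp add: sum.distrib)
    also have "\<dots> = real (card (S \<inter> {..r})) + real (card (S \<inter> {..<K}))"
      using that by (simp add: sum.If_cases Int_def)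
    finally show ?thesis .
  qed
  have "Lb \<le> APS n m v"
  proof (rule aps_lower[OF n, where p = "\<lambda>e. w e / W"])
    show "\<forall>e<m. 0 \<le> w e / W" using Wp unfolding w_def by simp
    have "(\<Sum>e<m. w e) = real (card ({..<m} \<inter> {..r})) + real (card ({..<m} \<inter> {..<K}))"
      by (rule wsum) simp
    also have "{..<m} \<inter> {..r} = {..r}" using r by auto
    also have "{..<m} \<inter> {..<K} = {..<K}" using r KR by auto
    finally have "(\<Sum>e<m. w e) = W" unfolding W_def by simp
    then show "(\<Sum>e<m. w e / W) = 1" using Wp by (simp add: sum_divide_distrib[symmetric])
    fix S assume S: "S \<subseteq> {..<m}" and q: "1 / real n \<le> (\<Sum>e\<in>S. w e / W)"
    have fS: "finite S" using S finite_subset by blast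
    define y where "y = card (S \<inter> {..r})"
    define x where "x = card (S \<inter> {..<K})"
    have "(\<Sum>e\<in>S. w e / W) = (real y + real x) / W"
      using wsum[OF fS] unfolding x_def y_def by (simp add: sum_divide_distrib[symmetric])
    with q have "1 / real n \<le> (real y + real x) / W" by simp
    then have "W \<le> real n * (real y + real x)" using Wp n by (simp add: field_simps)
    with W have "2 * real n + 1 \<le> real n * (real y + real x)" by simp
    then have "real n * 2 < real n * real (y + x)" by simp
    then have "2 < y + x" using n by (simp only: mult_less_cancel_left_pos)
    then have xy: "3 \<le> y + x" by simp
    have xley: "x \<le> y" unfolding x_def y_def using KR fS by (intro card_mono) auto
    show "Lb \<le> cost v S"
    proof (cases "x = 0")
      case True
      then have "3 \<le> y" using xy by simp
      have "real (card (S \<inter> {..r})) * v r \<le> cost v (S \<inter> {..r})"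
        unfolding cost_def by (rule sum_bounded_below) (use decr in auto)
      also have "\<dots> \<le> cost v S" using S v0 by (intro cost_mono[of _ S m]) auto
      finally have "real y * v r \<le> cost v S" unfolding y_def .
      moreover have "3 * v r \<le> real y * v r" using \<open>3 \<le> y\<close> v0 r by (intro mult_right_mono) auto
      ultimately show ?thesis unfolding Lb_def by linarith
    next
      case False
      then obtain e1 where e1: "e1 \<in> S" "e1 < K" unfolding x_def by (metis card.empty disjoint_iff lessThan_iff)
      have "2 \<le> y" using xy xley by simp
      then have "card (S \<inter> {..r} - {e1}) \<ge> 1" unfolding y_def using fS by (auto simp add: card_Diff_singleton_if)
      then obtain e2 where e2: "e2 \<in> S" "e2 \<le> r" "e2 \<noteq> e1" by (metis Diff_iff IntD1 IntD2 atMost_iff card.empty ex_in_conv insert_iff not_one_le_zero)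
      have K0: "0 < K" using e1 by simp
      have "v (K - 1) \<le> v e1"
      proof (cases "e1 = K - 1")
        case False
        then have "e1 < K - 1" using e1 by simp
        moreover have "K - 1 < m" using KR r by simp
        ultimately show ?thesis using dec by blast
      qed simp
      moreover have "v r \<le> v e2" using decr e2 by simp
      moreover have "cost v {e1, e2} \<le> cost v S" using S v0 e1 e2 by (intro cost_mono[of _ S m]) auto
      moreover have "cost v {e1, e2} = v e1 + v e2" using e2 unfolding cost_def by simp
      ultimately have "v (K - 1) + v r \<le> cost v S" by linarith
      then show ?thesis unfolding Lb_def using K0 by simp
    qed
  qed
  then show ?thesis unfolding Lb_def K_def
    by (cases "0 < 2 * n - r") (auto simp: min_def split: if_splits)
qed



lemma static:
  fixes v :: "nat \<Rightarrow> real" and B :: "nat \<Rightarrow> nat set"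
  assumes n: "n \<ge> 1" and r: "r < m" and v0: "\<forall>e<m. v e \<ge> 0"
    and dec: "\<forall>j k. j < k \<and> k < m \<longrightarrow> v j \<ge> v k" and i: "i < n"
    and disj: "\<forall>a<n. \<forall>b<n. a \<noteq> b \<longrightarrow> B a \<inter> B b = {}"
    and cover: "(\<Union>a<n. B a) = {..<r}"
    and noenv: "\<forall>j<n. cost v (B i) \<le> cost v (B j)"
  shows "cost v (B i) + v r \<le> (4 * real n - 1) / (3 * real n) * APS n m v"
proof -
  define Z where "Z = APS n m v"
  define A where "A = cost v (B i)"
  have sub: "B a \<subseteq> {..<r}" if "a < n" for a using cover that by blast
  have finB: "finite (B a)" if "a < n" for a using sub[OF that] finite_subset by blast
  have sumcard: "(\<Sum>a<n. card (B a)) = r"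
  proof -
    have "card (\<Union>a<n. B a) = (\<Sum>a<n. card (B a))"
      by (rule card_UN_disjoint) (use finB disj in auto)
    then show ?thesis using cover by simp
  qed
  have sumcost: "(\<Sum>a<n. cost v (B a)) = cost v {..<r}"
  proof -
    have "cost v (\<Union>a<n. B a) = (\<Sum>a<n. cost v (B a))"
      unfolding cost_def by (rule sum.UNION_disjoint) (use finB disj in auto)
    then show ?thesis using cover by simp
  qed
  have Z0: "v r \<le> Z" unfolding Z_def by (rule aps_single[OF n r v0])
  have vr0: "0 \<le> v r" using v0 r by simp
  have alpha: "1 \<le> (4 * real n - 1) / (3 * real n)" using n by (simp add: field_simps)
  have fin_ok: "A + v r \<le> Z \<Longrightarrow> ?thesis"
  proof -
    assume "A + v r \<le> Z"
    moreover have "Z \<le> (4 * real n - 1) / (3 * real n) * Z"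
      using mult_right_mono[OF alpha, of Z] Z0 vr0 by simp
    ultimately show ?thesis unfolding A_def Z_def by linarith
  qed
  show ?thesis
  proof (cases "r < n")
    case True
    have "\<exists>j<n. B j = {}"
    proof (rule ccontr)
      assume "\<not> ?thesis"
      then have "\<forall>j<n. 1 \<le> card (B j)" using finB by (simp add: Suc_le_eq card_gt_0_iff)
      then have "(\<Sum>a<n. (1::nat)) \<le> (\<Sum>a<n. card (B a))" by (intro sum_mono) auto
      then show False using sumcard True by simp
    qed
    then obtain j where j: "j < n" "B j = {}" by blast
    then have "A \<le> 0" using noenv unfolding A_def cost_def by force
    then show ?thesis using Z0 by (intro fin_ok) simp
  next
    case False
    then have nr: "n \<le> r" by simp
    from aps_pairs[OF n nr r v0 dec]
    have "3 * v r \<le> Z \<or> (r < 2 * n \<and> v (2 * n - r - 1) + v r \<le> Z)" unfolding Z_def .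
    then show ?thesis
    proof
      assume three: "3 * v r \<le> Z"
      have "real n * A \<le> (\<Sum>a<n. cost v (B a))"
      proof -
        have "(\<Sum>a<n. A) \<le> (\<Sum>a<n. cost v (B a))" using noenv unfolding A_def by (intro sum_mono) auto
        then show ?thesis by simp
      qed
      also have "\<dots> = cost v {..<r}" by (rule sumcost)
      also have "cost v {..<r} + v r = cost v {..<Suc r}" unfolding cost_def by simp
      then have "cost v {..<r} = cost v {..<Suc r} - v r" by simp
      also have "cost v {..<Suc r} \<le> cost v {..<m}" using r v0 by (intro cost_mono[of _ _ m]) auto
      also have "cost v {..<m} \<le> real n * Z" unfolding Z_def using aps_prop[OF n _ v0] r by simp
      finally have key: "real n * A + v r \<le> real n * Z" by simp
      have "3 * real n * (A + v r) \<le> (4 * real n - 1) * Z"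
      proof -
        have "(real n - 1) * (3 * v r) \<le> (real n - 1) * Z" using three n by (intro mult_left_mono) auto
        then show ?thesis using key by (simp add: algebra_simps)
      qed
      then have "A + v r \<le> (4 * real n - 1) * Z / (3 * real n)" using n by (simp add: field_simps)
      then show ?thesis unfolding A_def Z_def by simp
    next
      assume "r < 2 * n \<and> v (2 * n - r - 1) + v r \<le> Z"
      then have r2: "r < 2 * n" and hZ: "v (2 * n - r - 1) + v r \<le> Z" by auto
      define h where "h = 2 * n - r - 1"
      have hr: "h < r" unfolding h_def using nr n by simp
      have "\<exists>j<n. B j = {} \<or> (\<exists>e. B j = {e} \<and> h \<le> e)"
      proof (rule ccontr)
        assume "\<not> ?thesis"
        then have ne: "\<And>j. j < n \<Longrightarrow> B j \<noteq> {}" and sg: "\<And>j e. j < n \<Longrightarrow> B j = {e} \<Longrightarrow> e < h"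
          by (auto simp: not_le)
        define J where "J = {j \<in> {..<n}. card (B j) = 1}"
        have JU: "(\<Union>j\<in>J. B j) \<subseteq> {..<h}"
        proof
          fix x assume "x \<in> (\<Union>j\<in>J. B j)"
          then obtain j where "j \<in> J" "x \<in> B j" by blast
          then have "j < n" "card (B j) = 1" unfolding J_def by auto
          then obtain e where "B j = {e}" by (meson card_1_singletonE)
          then show "x \<in> {..<h}" using sg[OF \<open>j < n\<close>] \<open>x \<in> B j\<close> by auto
        qed
        have "card (\<Union>j\<in>J. B j) = (\<Sum>j\<in>J. card (B j))"
          by (rule card_UN_disjoint) (use finB disj in \<open>auto simp: J_def\<close>)
        also have "\<dots> = card J" unfolding J_def by simp
        finally have "card J \<le> h" using card_mono[OF _ JU] by simp
        have "(\<Sum>j<n. (if j \<in> J then 1 else 2::nat)) \<le> (\<Sum>j<n. card (B j))"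
        proof (intro sum_mono)
          fix j assume "j \<in> {..<n}"
          then have "card (B j) \<ge> 1" using ne finB by (simp add: Suc_le_eq card_gt_0_iff)
          then show "(if j \<in> J then 1 else 2) \<le> card (B j)" unfolding J_def using \<open>j \<in> {..<n}\<close> by auto
        qed
        moreover have "(\<Sum>j<n. (if j \<in> J then 1 else 2::nat)) = card J + 2 * (n - card J)"
        proof -
          have JS: "J \<subseteq> {..<n}" unfolding J_def by auto
          have "(\<Sum>j<n. (if j \<in> J then 1 else 2::nat)) = card ({..<n} \<inter> J) + 2 * card ({..<n} - J)"
            by (simp add: sum.If_cases Diff_eq)
          also have "{..<n} \<inter> J = J" using JS by auto
          also have "card ({..<n} - J) = n - card J" using JS by (simp add: card_Diff_subset finite_subset)
          finally show ?thesis .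
        qed
        moreover have "card J \<le> n" unfolding J_def by (metis (no_types, lifting) card_lessThan card_mono finite_lessThan mem_Collect_eq subsetI)
        ultimately show False using sumcard \<open>card J \<le> h\<close> unfolding h_def using r2 nr by linarith
      qed
      then obtain j where j: "j < n" and jj: "B j = {} \<or> (\<exists>e. B j = {e} \<and> h \<le> e)" by blast
      have "cost v (B j) \<le> v h"
        using jj
      proof
        assume "B j = {}"
        then show ?thesis using v0 hr r unfolding cost_def by simp
      next
        assume "\<exists>e. B j = {e} \<and> h \<le> e"
        then obtain e where e: "B j = {e}" "h \<le> e" by blast
        have "e < r" using sub[OF j] e by auto
        then show ?thesis using e dec r unfolding cost_def by (cases "h = e") auto
      qed
      then have "A \<le> v h" using noenv j unfolding A_def by force
      then show ?thesis using hZ unfolding h_def by (intro fin_ok) simp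
    qed
  qed
qed



lemma mod_suc_eq: "x < (L::nat) \<Longrightarrow> (x + 1) mod L = (if x + 1 = L then 0 else x + 1)"
proof (cases "x + 1 = L")
  case False
  assume "x < L"
  with False have "x + 1 < L" by simp
  then show ?thesis using False by simp
qed simp

lemma mod_suc_inj: "x < (L::nat) \<Longrightarrow> y < L \<Longrightarrow> (x + 1) mod L = (y + 1) mod L \<Longrightarrow> x = y"
  using mod_suc_eq[of x L] mod_suc_eq[of y L] by (simp split: if_splits)

lemma rot_exists:
  assumes cyc: "envy_cycle n c B cyc"
  shows "\<exists>\<sigma>. (\<forall>a. rotate_along cyc B a = B (\<sigma> a)) \<and> \<sigma> ` {..<n} = {..<n} \<and> inj_on \<sigma> {..<n}
    \<and> (\<forall>a\<in>set cyc. envies c B a (\<sigma> a))"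
proof -
  define \<sigma> where "\<sigma> = (\<lambda>a. if a \<in> set cyc
       then cyc ! (((THE t. t < length cyc \<and> cyc ! t = a) + 1) mod length cyc) else a)"
  define L where "L = length cyc"
  have ne: "cyc \<noteq> []" and dist: "distinct cyc" and sub: "set cyc \<subseteq> {..<n}"
    and env: "\<forall>t<L. envies c B (cyc ! t) (cyc ! ((t + 1) mod L))"
    using cyc unfolding envy_cycle_def L_def by auto
  have L0: "0 < L" using ne unfolding L_def by simp
  define idx where "idx a = (THE t. t < L \<and> cyc ! t = a)" for a
  have idx: "idx a < L \<and> cyc ! idx a = a" if aS: "a \<in> set cyc" for a
  proof -
    obtain t where t: "t < L" "cyc ! t = a" using aS unfolding L_def by (auto simp: in_set_conv_nth)
    have "idx a = t" unfolding idx_def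
    proof (rule the_equality)
      show "t < L \<and> cyc ! t = a" using t by simp
      fix x assume "x < L \<and> cyc ! x = a"
      then show "x = t" using t nth_eq_iff_index_eq[OF dist, of x t] unfolding L_def by simp
    qed
    then show ?thesis using t by simp
  qed
  have sig: "\<sigma> a = (if a \<in> set cyc then cyc ! ((idx a + 1) mod L) else a)" for a
    unfolding \<sigma>_def idx_def L_def by simp
  have f1: "rotate_along cyc B a = B (\<sigma> a)" for a
    unfolding rotate_along_def \<sigma>_def by simp
  have incyc: "\<sigma> a \<in> set cyc" if "a \<in> set cyc" for a
    using sig[of a] that L0 unfolding L_def by simp
  have inj: "inj_on \<sigma> {..<n}"
  proof
    fix a b assume "a \<in> {..<n}" "b \<in> {..<n}" and eq: "\<sigma> a = \<sigma> b"
    show "a = b"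
    proof (cases "a \<in> set cyc"; cases "b \<in> set cyc")
      assume a: "a \<in> set cyc" and b: "b \<in> set cyc"
      have "cyc ! ((idx a + 1) mod L) = cyc ! ((idx b + 1) mod L)" using eq sig a b by simp
      moreover have "(idx a + 1) mod L < length cyc" "(idx b + 1) mod L < length cyc"
        using L0 unfolding L_def by auto
      ultimately have "(idx a + 1) mod L = (idx b + 1) mod L"
        using nth_eq_iff_index_eq[OF dist] by blast
      then have "idx a = idx b" using idx a b mod_suc_inj by blast
      then show ?thesis using idx a b by metis
    next
      assume a: "a \<in> set cyc" and b: "b \<notin> set cyc"
      then show ?thesis using eq incyc[OF a] sig[of b] by simp
    next
      assume a: "a \<notin> set cyc" and b: "b \<in> set cyc"
      then show ?thesis using eq incyc[OF b] sig[of a] by simp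
    next
      assume a: "a \<notin> set cyc" and b: "b \<notin> set cyc"
      then show ?thesis using eq sig by simp
    qed
  qed
  have "\<sigma> ` {..<n} \<subseteq> {..<n}" using incyc sub sig by force
  then have f2: "\<sigma> ` {..<n} = {..<n}" using inj by (intro endo_inj_surj) auto
  have f4: "envies c B a (\<sigma> a)" if "a \<in> set cyc" for a
  proof -
    have "envies c B (cyc ! idx a) (cyc ! ((idx a + 1) mod L))" using env idx[OF that] by blast
    then show ?thesis using idx[OF that] sig[of a] that by simp
  qed
  have "(\<forall>a. rotate_along cyc B a = B (\<sigma> a)) \<and> \<sigma> ` {..<n} = {..<n} \<and> inj_on \<sigma> {..<n}
    \<and> (\<forall>a\<in>set cyc. envies c B a (\<sigma> a))" using f1 f2 inj f4 by simp
  then show ?thesis by (rule exI[of _ \<sigma>])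
qed



lemma invariant:
  fixes n m :: nat and c :: "nat \<Rightarrow> nat \<Rightarrow> real"
  assumes st: "alg_state n m c r B" and n: "n \<ge> 1" and m: "m \<ge> 1"
    and nonneg: "\<forall>i<n. \<forall>e<m. c i e \<ge> 0"
    and ident_ordered: "\<forall>i<n. \<forall>j k. j < k \<and> k < m \<longrightarrow> c i j \<ge> c i k"
  shows "r \<le> m \<and> (\<forall>a<n. \<forall>b<n. a \<noteq> b \<longrightarrow> B a \<inter> B b = {}) \<and> (\<Union>a<n. B a) = {..<r}
    \<and> (\<forall>a<n. cost (c a) (B a) \<le> (4 * real n - 1) / (3 * real n) * APS n m (c a))"
  using st
proof induction
  case init
  have "0 \<le> (4 * real n - 1) / (3 * real n) * APS n m (c a)" if "a < n" for a
  proof -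
    have "c a 0 \<le> APS n m (c a)" using aps_single[OF n _, of 0 m "c a"] m nonneg that by simp
    moreover have "0 \<le> c a 0" using nonneg m that by simp
    moreover have "0 \<le> (4 * real n - 1) / (3 * real n)" using n by simp
    ultimately show ?thesis by (intro mult_nonneg_nonneg) linarith+
  qed
  then show ?case by (simp add: cost_def)
next
  case (add r B i)
  have IH: "r \<le> m" "\<forall>a<n. \<forall>b<n. a \<noteq> b \<longrightarrow> B a \<inter> B b = {}" "(\<Union>a<n. B a) = {..<r}"
     "\<forall>a<n. cost (c a) (B a) \<le> (4 * real n - 1) / (3 * real n) * APS n m (c a)"
    using add.IH by auto
  have sub: "B a \<subseteq> {..<r}" if "a < n" for a using IH(3) that by blast
  have rnot: "r \<notin> B a" if "a < n" for a using sub[OF that] by auto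
  define B' where "B' = B(i := insert r (B i))"
  have d: "\<forall>a<n. \<forall>b<n. a \<noteq> b \<longrightarrow> B' a \<inter> B' b = {}"
  proof (intro allI impI)
    fix a b assume ab: "a < n" "b < n" "a \<noteq> b"
    then have "B a \<inter> B b = {}" using IH(2) by blast
    moreover have "r \<notin> B a" "r \<notin> B b" using rnot ab by auto
    ultimately show "B' a \<inter> B' b = {}" unfolding B'_def using ab(3) by (cases "a = i"; cases "b = i") auto
  qed
  have u: "(\<Union>a<n. B' a) = {..<Suc r}"
  proof -
    have "(\<Union>a<n. B' a) = (\<Union>a<n. B a) \<union> {r}"
    proof (intro equalityI subsetI)
      fix x assume "x \<in> (\<Union>a<n. B' a)"
      then obtain a where "a < n" "x \<in> B' a" by blast
      then show "x \<in> (\<Union>a<n. B a) \<union> {r}" unfolding B'_def by (cases "a = i") auto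
    next
      fix x assume x: "x \<in> (\<Union>a<n. B a) \<union> {r}"
      show "x \<in> (\<Union>a<n. B' a)"
      proof (cases "x = r")
        case True
        then have "x \<in> B' i" unfolding B'_def by simp
        then show ?thesis using add.hyps(4) by blast
      next
        case False
        then obtain a where "a < n" "x \<in> B a" using x by blast
        then have "x \<in> B' a" unfolding B'_def by (cases "a = i") auto
        then show ?thesis using \<open>a < n\<close> by blast
      qed
    qed
    then show ?thesis using IH(3) by (simp add: lessThan_Suc)
  qed
  have cst: "cost (c a) (B' a) \<le> (4 * real n - 1) / (3 * real n) * APS n m (c a)" if a: "a < n" for a
  proof (cases "a = i")
    case False
    then show ?thesis using IH(4) a unfolding B'_def by simp
  next
    case True
    have fin: "finite (B i)" using sub[OF add.hyps(4)] finite_subset by blast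
    have "cost (c i) (B' i) = cost (c i) (B i) + c i r"
      unfolding B'_def cost_def using fin rnot[OF add.hyps(4)] by (simp add: add.commute)
    also have "\<dots> \<le> (4 * real n - 1) / (3 * real n) * APS n m (c i)"
    proof (rule static[OF n add.hyps(2)])
      show "\<forall>e<m. 0 \<le> c i e" using nonneg add.hyps(4) by simp
      show "\<forall>j k. j < k \<and> k < m \<longrightarrow> c i k \<le> c i j" using ident_ordered add.hyps(4) by simp
      show "i < n" by (rule add.hyps(4))
      show "\<forall>a<n. \<forall>b<n. a \<noteq> b \<longrightarrow> B a \<inter> B b = {}" by (rule IH(2))
      show "(\<Union>a<n. B a) = {..<r}" by (rule IH(3))
      show "\<forall>j<n. cost (c i) (B i) \<le> cost (c i) (B j)" using add.hyps(5) unfolding envies_def by (auto simp: not_less)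
    qed
    finally show ?thesis using True by simp
  qed
  show ?case using d u cst add.hyps(2) unfolding B'_def by simp
next
  case (rot r B cyc)
  have IH: "r \<le> m" "\<forall>a<n. \<forall>b<n. a \<noteq> b \<longrightarrow> B a \<inter> B b = {}" "(\<Union>a<n. B a) = {..<r}"
     "\<forall>a<n. cost (c a) (B a) \<le> (4 * real n - 1) / (3 * real n) * APS n m (c a)"
    using rot.IH by auto
  obtain \<sigma> where sall: "(\<forall>a. rotate_along cyc B a = B (\<sigma> a)) \<and> \<sigma> ` {..<n} = {..<n} \<and> inj_on \<sigma> {..<n}
    \<and> (\<forall>a\<in>set cyc. envies c B a (\<sigma> a))"
    using rot_exists[OF rot.hyps(2)] by (rule exE)
  have s1: "\<And>a. rotate_along cyc B a = B (\<sigma> a)" using sall by simp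
  have s2: "\<sigma> ` {..<n} = {..<n}" using sall by simp
  have s3: "inj_on \<sigma> {..<n}" using sall by simp
  have s4: "\<And>a. a \<in> set cyc \<Longrightarrow> envies c B a (\<sigma> a)" using sall by simp
  have sin: "\<sigma> a < n" if "a < n" for a using s2 that by auto
  have d: "\<forall>a<n. \<forall>b<n. a \<noteq> b \<longrightarrow> rotate_along cyc B a \<inter> rotate_along cyc B b = {}"
  proof (intro allI impI)
    fix a b assume "a < n" "b < n" "a \<noteq> b"
    then have "\<sigma> a \<noteq> \<sigma> b" using s3 by (auto dest: inj_onD)
    then show "rotate_along cyc B a \<inter> rotate_along cyc B b = {}"
      using IH(2) sin \<open>a < n\<close> \<open>b < n\<close> s1 by simp
  qed
  have u: "(\<Union>a<n. rotate_along cyc B a) = {..<r}"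
  proof -
    have "(\<Union>a<n. rotate_along cyc B a) = (\<Union>a\<in>{..<n}. B (\<sigma> a))" using s1 by simp
    also have "\<dots> = (\<Union>b\<in>\<sigma> ` {..<n}. B b)" by simp
    also have "\<dots> = (\<Union>b<n. B b)" using s2 by simp
    finally show ?thesis using IH(3) by simp
  qed
  have cst: "cost (c a) (rotate_along cyc B a) \<le> (4 * real n - 1) / (3 * real n) * APS n m (c a)"
    if a: "a < n" for a
  proof (cases "a \<in> set cyc")
    case True
    then have "cost (c a) (B (\<sigma> a)) < cost (c a) (B a)" using s4 unfolding envies_def by simp
    moreover have "cost (c a) (B a) \<le> (4 * real n - 1) / (3 * real n) * APS n m (c a)" using IH(4) a by blast
    ultimately show ?thesis unfolding s1 by linarith
  next
    case False
    then show ?thesis using IH(4) a unfolding rotate_along_def by simp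
  qed
  show ?case using IH(1) d u cst by simp
qed


theorem lemma7:
  fixes n m :: nat and c :: "nat \<Rightarrow> nat \<Rightarrow> real" and B :: "nat \<Rightarrow> nat set"
  assumes "n \<ge> 1" and "m \<ge> 1"
    and nonneg: "\<forall>i<n. \<forall>e<m. c i e \<ge> 0"
    and ident_ordered: "\<forall>i<n. \<forall>j k. j < k \<and> k < m \<longrightarrow> c i j \<ge> c i k"
    and out: "algchores_output n m c B"
  shows "\<forall>i<n. cost (c i) (B i) \<le> (4 * real n - 1) / (3 * real n) * APS n m (c i)"
proof -
  have st: "alg_state n m c m B" using out unfolding algchores_output_def by simp
  show ?thesis using invariant[OF st assms(1) assms(2) nonneg ident_ordered] by blast
qed

end
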